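(* Let $U$ be a unicyclic graph of order $n\ge 3$ and let $X\in\mathbb R^{V(U)}$ be a vector all of whose entries are non-negative, or all of whose entries are non-positive. Label the vertices $v_1,\dots,v_n$ of $U$ so that $|X_{v_1}|\ge |X_{v_2}|\ge\cdots\ge |X_{v_n}|$, and write $X_i=X_{v_i}$. Then $$\sum_{uv\in E(U)}X_uX_v\ \le\ \sum_{i=2}^n X_1X_i+X_2X_3,$$ where the right-hand side equals $\sum_{uv\in E(S)}X_uX_v$ for the copy $S$ of $S_n^3$ on the same vertex set in which $v_1$ is adjacent to all other vertices and $v_2v_3$ is the additional edge. If moreover all entries of $X$ are positive (or all are negative) and $|X_1|>|X_2|$, then equality holds only if $U$ is isomorphic to $S_n^3$, with $v_1$ being its vertex of degree $n-1$.
   Context: A unicyclic graph is a connected graph containing exactly one cycle. $S_n^3$ denotes the graph of order $n$ obtained from the star $K_{1,n-1}$ by adding one edge between two of its pendant (degree-one) vertices. *)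

theory Defs
  imports Complex_Main
begin

definition simple_graph :: "'a set \<Rightarrow> 'a set set \<Rightarrow> bool" where
  "simple_graph V E \<longleftrightarrow> finite V \<and>
     (\<forall>e\<in>E. \<exists>u v. u \<in> V \<and> v \<in> V \<and> u \<noteq> v \<and> e = {u, v})"

definition adj :: "'a set set \<Rightarrow> 'a \<Rightarrow> 'a \<Rightarrow> bool" where
  "adj E u v \<longleftrightarrow> {u, v} \<in> E"

definition connected_graph :: "'a set \<Rightarrow> 'a set set \<Rightarrow> bool" where
  "connected_graph V E \<longleftrightarrow> V \<noteq> {} \<and>
     (\<forall>u\<in>V. \<forall>v\<in>V. (u, v) \<in> {(x, y). adj E x y}\<^sup>*)"

definition cycle_edges :: "'a list \<Rightarrow> 'a set set" where
  "cycle_edges vs = {{vs ! i, vs ! ((i + 1) mod length vs)} | i. i < length vs}"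

text \<open>A cycle of the graph (as a subgraph, identified with its edge set).\<close>
definition is_cycle :: "'a set set \<Rightarrow> 'a set set \<Rightarrow> bool" where
  "is_cycle E C \<longleftrightarrow> (\<exists>vs. length vs \<ge> 3 \<and> distinct vs \<and> C = cycle_edges vs \<and> C \<subseteq> E)"

definition unicyclic :: "'a set \<Rightarrow> 'a set set \<Rightarrow> bool" where
  "unicyclic V E \<longleftrightarrow> simple_graph V E \<and> connected_graph V E \<and> (\<exists>!C. is_cycle E C)"

definition S3_edges :: "nat \<Rightarrow> nat set set" where
  "S3_edges n = {{0, i} | i. 1 \<le> i \<and> i < n} \<union> {{1, 2}}"

definition graph_iso :: "('a \<Rightarrow> 'b) \<Rightarrow> 'a set \<Rightarrow> 'a set set \<Rightarrow> 'b set \<Rightarrow> 'b set set \<Rightarrow> bool" where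
  "graph_iso f V E W F \<longleftrightarrow> bij_betw f V W \<and>
     (\<forall>u\<in>V. \<forall>v\<in>V. {u, v} \<in> E \<longleftrightarrow> {f u, f v} \<in> F)"

end

theory Submission
  imports Defs
begin


definition twosets :: "'a set set \<Rightarrow> bool" where
  "twosets F \<longleftrightarrow> (\<forall>e\<in>F. \<exists>u w. u \<noteq> w \<and> e = {u, w})"

definition gpath :: "'a set set \<Rightarrow> 'a list \<Rightarrow> bool" where
  "gpath F xs \<longleftrightarrow> distinct xs \<and> (\<forall>i. Suc i < length xs \<longrightarrow> {xs!i, xs!Suc i} \<in> F)"

lemma gpath_rev: assumes "gpath F xs" shows "gpath F (rev xs)"
  unfolding gpath_def
proof (intro conjI allI impI)
  show "distinct (rev xs)" using assms by (simp add: gpath_def)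
  fix i assume i: "Suc i < length (rev xs)"
  define j where "j = length xs - Suc (Suc i)"
  have j1: "Suc j < length xs" "length xs - Suc i = Suc j" using i by (auto simp: j_def)
  have "{xs!j, xs!Suc j} \<in> F" using assms j1 by (simp add: gpath_def)
  then show "{rev xs ! i, rev xs ! Suc i} \<in> F" using i j1
    by (simp add: rev_nth j_def insert_commute)
qed

lemma gpath_cons: assumes "gpath F xs" "xs \<noteq> []" "y \<notin> set xs" "{y, hd xs} \<in> F"
  shows "gpath F (y # xs)"
  unfolding gpath_def
proof (intro conjI allI impI)
  show "distinct (y # xs)" using assms by (simp add: gpath_def)
  fix i assume i: "Suc i < length (y # xs)"
  show "{(y # xs) ! i, (y # xs) ! Suc i} \<in> F"
  proof (cases i)
    case 0 then show ?thesis using assms by (simp add: hd_conv_nth)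
  next
    case (Suc k) then show ?thesis using assms i by (simp add: gpath_def)
  qed
qed

lemma cycle_from_path:
  assumes "gpath F xs" "2 \<le> k" "k < length xs" "{xs!k, xs!0} \<in> F"
  shows "is_cycle F (cycle_edges (take (Suc k) xs))"
  unfolding is_cycle_def
proof (intro exI conjI)
  let ?vs = "take (Suc k) xs"
  show "3 \<le> length ?vs" using assms by simp
  show "distinct ?vs" using assms by (simp add: gpath_def)
  show "cycle_edges ?vs = cycle_edges ?vs" ..
  show "cycle_edges ?vs \<subseteq> F"
  proof
    fix e assume "e \<in> cycle_edges ?vs"
    have lv: "length ?vs = Suc k" using assms by simp
    obtain i where i0: "i < length ?vs" "e = {?vs ! i, ?vs ! ((i + 1) mod length ?vs)}"
      using \<open>e \<in> cycle_edges ?vs\<close> unfolding cycle_edges_def by blast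
    then have i: "i < Suc k" "e = {?vs ! i, ?vs ! ((i + 1) mod Suc k)}" using lv by auto
    show "e \<in> F"
    proof (cases "i < k")
      case True
      then have "(i + 1) mod Suc k = Suc i" by simp
      then show ?thesis using i True assms by (simp add: gpath_def)
    next
      case False
      then have "i = k" using i by simp
      then show ?thesis using i assms by simp
    qed
  qed
qed

lemma maxpath:
  assumes "finite F" "twosets F" "F \<noteq> {}"
  obtains xs where "gpath F xs" "length xs \<ge> 2"
    "\<And>y. {hd xs, y} \<in> F \<Longrightarrow> y \<in> set xs"
    "\<And>y. {last xs, y} \<in> F \<Longrightarrow> y \<in> set xs"
proof -
  let ?P = "\<lambda>xs. gpath F xs \<and> set xs \<subseteq> \<Union>F"
  have finU: "finite (\<Union>F)" using assms unfolding twosets_def by auto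
  obtain e where e: "e \<in> F" using assms by auto
  then obtain u w where uw: "u \<noteq> w" "e = {u, w}" using assms unfolding twosets_def by blast
  have P0: "?P [u, w]" using uw e by (auto simp: gpath_def)
  have bnd: "\<forall>ys. ?P ys \<longrightarrow> length ys < Suc (card (\<Union>F))"
  proof (intro allI impI)
    fix ys assume "?P ys"
    then have "length ys = card (set ys)" "card (set ys) \<le> card (\<Union>F)"
      using finU by (auto simp: gpath_def distinct_card[symmetric] intro: card_mono)
    then show "length ys < Suc (card (\<Union>F))" by simp
  qed
  obtain xs where xs: "?P xs" "\<forall>ys. ?P ys \<longrightarrow> length ys \<le> length xs"
    using ex_has_greatest_nat[OF P0 bnd] by blast
  have "length [u, w] \<le> length xs" using xs(2) P0 by blast
  then have len: "length xs \<ge> 2" by simp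
  then have ne: "xs \<noteq> []" by auto
  show ?thesis
  proof
    show "gpath F xs" "length xs \<ge> 2" using xs len by auto
    show "y \<in> set xs" if "{hd xs, y} \<in> F" for y
    proof (rule ccontr)
      assume "y \<notin> set xs"
      have e: "{y, hd xs} \<in> F" using that by (simp add: insert_commute)
      have "gpath F (y # xs)" using gpath_cons[OF _ ne \<open>y \<notin> set xs\<close> e] xs(1) by blast
      moreover have "set (y # xs) \<subseteq> \<Union>F" using xs(1) that by auto
      ultimately have "?P (y # xs)" by blast
      then have "length (y # xs) \<le> length xs" using xs(2) by blast
      then show False by simp
    qed
    show "y \<in> set xs" if "{last xs, y} \<in> F" for y
    proof (rule ccontr)
      assume "y \<notin> set xs"
      have e: "{y, hd (rev xs)} \<in> F" using that by (simp add: insert_commute hd_rev)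
      have "gpath F (y # rev xs)" using gpath_cons[OF gpath_rev _ _ e] xs(1) ne \<open>y \<notin> set xs\<close> by simp
      moreover have "set (y # rev xs) \<subseteq> \<Union>F" using xs(1) that by auto
      ultimately have "?P (y # rev xs)" by blast
      then have "length (y # rev xs) \<le> length xs" using xs(2) by blast
      then show False by simp
    qed
  qed
qed

lemma leaf_end:
  assumes "twosets F" "gpath F xs" "length xs \<ge> 2"
    "\<And>y. {hd xs, y} \<in> F \<Longrightarrow> y \<in> set xs" "\<not> (\<exists>C. is_cycle F C)"
    "e \<in> F" "hd xs \<in> e"
  shows "e = {xs!0, xs!1}"
proof -
  obtain u w where uw: "u \<noteq> w" "e = {u, w}" using assms(1,6) unfolding twosets_def by blast
  obtain y where y: "e = {hd xs, y}" "y \<noteq> hd xs"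
  proof (cases "hd xs = u")
    case True
    then show ?thesis using that[of w] uw by simp
  next
    case False
    then have "hd xs = w" using uw assms(7) by simp
    then show ?thesis using that[of u] uw by (simp add: insert_commute)
  qed
  have "y \<in> set xs" using assms(4)[of y] assms(6) y(1) by simp
  then obtain k where k: "k < length xs" "xs ! k = y" by (auto simp: in_set_conv_nth)
  have h0: "hd xs = xs ! 0" using assms(3) by (cases xs) auto
  have ek: "e = {xs!0, xs!k}" using y(1) k(2) h0 by simp
  have "k \<noteq> 0"
  proof
    assume "k = 0"
    then have "y = hd xs" using k(2) h0 by simp
    then show False using y(2) by simp
  qed
  moreover have "\<not> 2 \<le> k"
  proof
    assume "2 \<le> k"
    have "{xs!k, xs!0} = e" using ek by (simp add: insert_commute)
    then have "{xs!k, xs!0} \<in> F" using assms(6) by simp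
    then show False using cycle_from_path[OF assms(2) \<open>2 \<le> k\<close> k(1)] assms(5) by blast
  qed
  ultimately have "k = 1" by simp
  then show ?thesis using ek by simp
qed

lemma acyclic_subset: "\<not> (\<exists>C. is_cycle F C) \<Longrightarrow> G \<subseteq> F \<Longrightarrow> \<not> (\<exists>C. is_cycle G C)"
  unfolding is_cycle_def by blast

lemma twosets_subset: "twosets F \<Longrightarrow> G \<subseteq> F \<Longrightarrow> twosets G"
  unfolding twosets_def by blast

lemma forest_orient:
  assumes "finite F" "twosets F" "\<not> (\<exists>C. is_cycle F C)"
  shows "\<exists>\<phi>. inj_on \<phi> F \<and> (\<forall>e\<in>F. \<phi> e \<in> e \<and> \<phi> e \<noteq> r)"
  using assms
proof (induction F rule: finite_psubset_induct)
  case (psubset F)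
  show ?case
  proof (cases "F = {}")
    case True then show ?thesis by auto
  next
    case False
    obtain xs where xs: "gpath F xs" "length xs \<ge> 2"
      "\<And>y. {hd xs, y} \<in> F \<Longrightarrow> y \<in> set xs" "\<And>y. {last xs, y} \<in> F \<Longrightarrow> y \<in> set xs"
      using maxpath[OF psubset(1,3) False] by blast
    have rx: "gpath F (rev xs)" "length (rev xs) \<ge> 2"
       "\<And>y. {hd (rev xs), y} \<in> F \<Longrightarrow> y \<in> set (rev xs)"
      using xs gpath_rev by (auto simp: hd_rev)
    have hl: "hd xs \<noteq> last xs"
    proof -
      obtain a zs where az: "xs = a # zs" using xs(2) by (cases xs) auto
      then have "zs \<noteq> []" using xs(2) by auto
      then have "last xs = last zs" "last zs \<in> set zs" using az by auto
      moreover have "a \<notin> set zs" using xs(1) az by (simp add: gpath_def)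
      ultimately show ?thesis using az by auto
    qed
    obtain x ys where x: "x \<noteq> r" "gpath F ys" "length ys \<ge> 2"
      "\<And>y. {hd ys, y} \<in> F \<Longrightarrow> y \<in> set ys" "x = hd ys"
    proof (cases "hd xs = r")
      case True
      then have "last xs \<noteq> r" using hl by auto
      then show ?thesis using that[of "hd (rev xs)" "rev xs"] rx by (simp add: hd_rev)
    next
      case False
      then show ?thesis using that[of "hd xs" xs] xs by simp
    qed
    define e0 where "e0 = {ys!0, ys!1}"
    have leaf: "e = e0" if "e \<in> F" "x \<in> e" for e
      using leaf_end[OF psubset(3) x(2,3,4) psubset(4) that(1)] that(2) x(5) by (simp add: e0_def)
    have "\<forall>i. Suc i < length ys \<longrightarrow> {ys!i, ys!Suc i} \<in> F" using x(2) by (simp add: gpath_def)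
    then have e0F: "e0 \<in> F" using x(3) unfolding e0_def by (metis One_nat_def Suc_1 Suc_le_lessD)
    have xe0: "x \<in> e0" using x(3,5) by (cases ys) (auto simp: e0_def)
    let ?F' = "F - {e0}"
    have s1: "?F' \<subset> F" using e0F by auto
    have s2: "twosets ?F'" using psubset(3) twosets_subset by blast
    have s3: "\<not> (\<exists>C. is_cycle ?F' C)" using psubset(4) acyclic_subset by blast
    obtain \<phi> where \<phi>: "inj_on \<phi> ?F'" "\<forall>e\<in>?F'. \<phi> e \<in> e \<and> \<phi> e \<noteq> r"
      using psubset(2)[OF s1 s2 s3] by blast
    have nx: "\<forall>e\<in>?F'. \<phi> e \<noteq> x" using \<phi>(2) leaf by blast
    have "inj_on (\<phi>(e0 := x)) F"
      unfolding inj_on_def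
    proof (intro ballI impI)
      fix a b assume ab: "a \<in> F" "b \<in> F" "(\<phi>(e0 := x)) a = (\<phi>(e0 := x)) b"
      show "a = b"
      proof (cases "a = e0"; cases "b = e0")
        assume "a \<noteq> e0" "b \<noteq> e0"
        then show ?thesis using ab \<phi>(1) by (simp add: inj_on_def)
      next
        assume "a = e0" "b \<noteq> e0"
        then show ?thesis using ab nx by auto
      next
        assume "a \<noteq> e0" "b = e0"
        then show ?thesis using ab nx by auto
      qed simp
    qed
    moreover have "\<forall>e\<in>F. (\<phi>(e0 := x)) e \<in> e \<and> (\<phi>(e0 := x)) e \<noteq> r"
      using \<phi>(2) xe0 x(1) by auto
    ultimately show ?thesis by blast
  qed
qed

lemma unicyclic_orient:
  assumes "finite E" "twosets E" "\<exists>!C. is_cycle E C"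
  shows "\<exists>\<phi>. inj_on \<phi> E \<and> (\<forall>e\<in>E. \<phi> e \<in> e)"
proof -
  obtain C where C: "is_cycle E C" "\<And>C'. is_cycle E C' \<Longrightarrow> C' = C" using assms(3) by blast
  then obtain vs where vs: "length vs \<ge> 3" "distinct vs" "C = cycle_edges vs" "C \<subseteq> E"
    unfolding is_cycle_def by blast
  define e0 where "e0 = {vs!0, vs!1}"
  have l1: "1 < length vs" using vs(1) by simp
  have m1: "(0 + 1) mod length vs = 1" using l1 by simp
  have "e0 = {vs ! 0, vs ! ((0 + 1) mod length vs)}" unfolding m1 by (simp add: e0_def)
  moreover have "(0::nat) < length vs" using vs(1) by linarith
  ultimately have "e0 \<in> C" unfolding vs(3) cycle_edges_def by blast
  then have e0E: "e0 \<in> E" using vs by auto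
  have acyc: "\<not> (\<exists>C'. is_cycle (E - {e0}) C')"
  proof
    assume "\<exists>C'. is_cycle (E - {e0}) C'"
    then obtain C' where C': "is_cycle (E - {e0}) C'" by blast
    then have "is_cycle E C'" unfolding is_cycle_def by blast
    then have "C' = C" using C by blast
    then show False using C' \<open>e0 \<in> C\<close> unfolding is_cycle_def by blast
  qed
  have tw': "twosets (E - {e0})" by (rule twosets_subset[OF assms(2)]) auto
  have fin': "finite (E - {e0})" using assms(1) by simp
  obtain \<phi> where \<phi>: "inj_on \<phi> (E - {e0})" "\<forall>e\<in>E - {e0}. \<phi> e \<in> e \<and> \<phi> e \<noteq> vs!0"
    using forest_orient[OF fin' tw' acyc, of "vs!0"] by blast
  have "inj_on (\<phi>(e0 := vs!0)) E"
    unfolding inj_on_def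
  proof (intro ballI impI)
    fix a b assume ab: "a \<in> E" "b \<in> E" "(\<phi>(e0 := vs!0)) a = (\<phi>(e0 := vs!0)) b"
    show "a = b"
    proof (cases "a = e0"; cases "b = e0")
      assume "a \<noteq> e0" "b \<noteq> e0"
      then show ?thesis using ab \<phi>(1) by (simp add: inj_on_def)
    next
      assume "a = e0" "b \<noteq> e0"
      then show ?thesis using ab \<phi>(2) by auto
    next
      assume "a \<noteq> e0" "b = e0"
      then show ?thesis using ab \<phi>(2) by auto
    qed simp
  qed
  moreover have "\<forall>e\<in>E. (\<phi>(e0 := vs!0)) e \<in> e" using \<phi>(2) by (auto simp: e0_def)
  ultimately show ?thesis by blast
qed



lemma finE_lem:
  assumes finV: "finite V" and EV: "\<forall>e\<in>E. \<exists>u w. u \<in> V \<and> w \<in> V \<and> u \<noteq> w \<and> e = {u, w}"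
  shows "finite E"
proof (rule finite_subset[of E "Pow V"])
  show "E \<subseteq> Pow V"
  proof
    fix e assume "e \<in> E"
    then obtain u w where "u \<in> V" "w \<in> V" "e = {u, w}" using EV by blast
    then show "e \<in> Pow V" by simp
  qed
qed (use finV in simp)

lemma main_ineq:
  fixes E :: "'a set set" and Y :: "'a \<Rightarrow> real"
  assumes finV: "finite V"
    and EV: "\<forall>e\<in>E. \<exists>u w. u \<in> V \<and> w \<in> V \<and> u \<noteq> w \<and> e = {u, w}"
    and inj: "inj_on \<phi> E" and phi: "\<forall>e\<in>E. \<phi> e \<in> e"
    and Ynn: "\<forall>x\<in>V. 0 \<le> Y x" and x1: "x1 \<in> V"
    and bnd1: "\<forall>u\<in>V-{x1}. Y u \<le> Y x1"
    and bnd2: "\<forall>u\<in>V-{x1}. \<forall>w\<in>V-{x1}. u \<noteq> w \<longrightarrow> Y u * Y w \<le> c"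
    and c0: "0 \<le> c"
  shows "sum (prod Y) E \<le> (\<Sum>y\<in>V-{x1}. Y x1 * Y y) + c
    \<and> ((\<forall>x\<in>V. 0 < Y x) \<longrightarrow> (\<forall>u\<in>V-{x1}. Y u < Y x1) \<longrightarrow> 0 < c \<longrightarrow>
        sum (prod Y) E = (\<Sum>y\<in>V-{x1}. Y x1 * Y y) + c \<longrightarrow>
        (\<exists>p q. p \<in> V-{x1} \<and> q \<in> V-{x1} \<and> p \<noteq> q \<and>
           E = (\<lambda>y. {x1, y}) ` (V-{x1}) \<union> {{p, q}}))"
proof -
  have finE: "finite E" using finE_lem[OF finV EV] .
  define N where "N = {y\<in>V. {x1, y} \<in> E}"
  have x1N: "x1 \<notin> N"
  proof
    assume "x1 \<in> N"
    then have "{x1} \<in> E" by (simp add: N_def)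
    then obtain u w where uw: "u \<noteq> w" "{x1} = {u, w}" using EV by blast
    have "u \<in> {x1}" "w \<in> {x1}" by (simp_all add: uw(2))
    then show False using uw(1) by simp
  qed
  have NV: "N \<subseteq> V - {x1}" using x1N by (auto simp: N_def)
  define Z where "Z = V - {x1} - N"
  define E1 where "E1 = {e\<in>E. x1 \<in> e}"
  define E0 where "E0 = E - E1"
  define B where "B = {e\<in>E0. \<phi> e \<in> N}"
  define R where "R = E0 - B"
  have E1img: "E1 = (\<lambda>y. {x1, y}) ` N"
  proof
    show "E1 \<subseteq> (\<lambda>y. {x1, y}) ` N"
    proof
      fix e assume "e \<in> E1"
      then have e: "e \<in> E" "x1 \<in> e" by (auto simp: E1_def)
      then obtain u w where uw: "u \<in> V" "w \<in> V" "u \<noteq> w" "e = {u, w}" using EV by blast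
      show "e \<in> (\<lambda>y. {x1, y}) ` N"
      proof (cases "u = x1")
        case True
        then have "w \<in> N" using uw e by (simp add: N_def)
        then show ?thesis using uw True by blast
      next
        case False
        then have "w = x1" using e uw by auto
        then have "u \<in> N" using uw e by (simp add: N_def insert_commute)
        then show ?thesis using uw \<open>w = x1\<close> by (auto simp: insert_commute)
      qed
    qed
    show "(\<lambda>y. {x1, y}) ` N \<subseteq> E1" by (auto simp: N_def E1_def)
  qed
  have injN: "inj_on (\<lambda>y. {x1, y}) N"
    unfolding inj_on_def using x1N by (auto simp: doubleton_eq_iff)
  have finN: "finite N" using finV by (simp add: N_def)
  have S1: "sum (prod Y) E1 = (\<Sum>y\<in>N. Y x1 * Y y)"
  proof -
    have "sum (prod Y) E1 = (\<Sum>y\<in>N. prod Y {x1, y})"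
      unfolding E1img by (rule sum.reindex[OF injN, unfolded comp_def])
    also have "\<dots> = (\<Sum>y\<in>N. Y x1 * Y y)"
    proof (rule sum.cong)
      fix y assume "y \<in> N"
      then have "y \<noteq> x1" using x1N by auto
      then show "prod Y {x1, y} = Y x1 * Y y" by simp
    qed simp
    finally show ?thesis .
  qed
  have E0e: "\<And>e. e \<in> E0 \<Longrightarrow> \<exists>u w. u \<in> V-{x1} \<and> w \<in> V-{x1} \<and> u \<noteq> w \<and> e = {u, w}"
  proof -
    fix e assume "e \<in> E0"
    then have e: "e \<in> E" "x1 \<notin> e" by (auto simp: E0_def E1_def)
    then obtain u w where uw: "u \<in> V" "w \<in> V" "u \<noteq> w" "e = {u, w}" using EV by blast
    then show "\<exists>u w. u \<in> V-{x1} \<and> w \<in> V-{x1} \<and> u \<noteq> w \<and> e = {u, w}" using e by blast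
  qed
  have phiB: "\<And>e. e \<in> B \<Longrightarrow> \<phi> {x1, \<phi> e} = x1"
  proof -
    fix e assume eB: "e \<in> B"
    then have e: "e \<in> E" "x1 \<notin> e" "\<phi> e \<in> N" by (auto simp: B_def E0_def E1_def)
    have f: "{x1, \<phi> e} \<in> E" using e by (simp add: N_def)
    have "\<phi> {x1, \<phi> e} \<in> {x1, \<phi> e}" using phi f by blast
    moreover have "\<phi> {x1, \<phi> e} \<noteq> \<phi> e"
    proof
      assume "\<phi> {x1, \<phi> e} = \<phi> e"
      then have "{x1, \<phi> e} = e" using inj f e(1) by (simp add: inj_on_def)
      then show False using e by auto
    qed
    ultimately show "\<phi> {x1, \<phi> e} = x1" by simp
  qed
  have Buniq: "\<And>e e'. e \<in> B \<Longrightarrow> e' \<in> B \<Longrightarrow> e = e'"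
  proof -
    fix e e' assume ee: "e \<in> B" "e' \<in> B"
    then have e: "e \<in> E" "x1 \<notin> e" "\<phi> e \<in> N" "e' \<in> E" "x1 \<notin> e'" "\<phi> e' \<in> N"
      by (auto simp: B_def E0_def E1_def)
    have f: "{x1, \<phi> e} \<in> E" "{x1, \<phi> e'} \<in> E" using e by (simp_all add: N_def)
    have "{x1, \<phi> e} = {x1, \<phi> e'}" using phiB[OF ee(1)] phiB[OF ee(2)] inj f
      by (metis inj_on_def)
    moreover have "\<phi> e \<noteq> x1" "\<phi> e' \<noteq> x1" using e phi by auto
    ultimately have "\<phi> e = \<phi> e'" by (auto simp: doubleton_eq_iff)
    then show "e = e'" using inj e by (simp add: inj_on_def)
  qed
  have Bcases: "B = {} \<or> (\<exists>e. B = {e})" using Buniq by blast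
  have finE0: "finite E0" using finE by (simp add: E0_def)
  have SB: "sum (prod Y) B \<le> c"
  proof (cases "B = {}")
    case True then show ?thesis using c0 by simp
  next
    case False
    then obtain e where eB: "B = {e}" using Bcases by blast
    then have "e \<in> E0" by (auto simp: B_def)
    then obtain u w where uw: "u \<in> V-{x1}" "w \<in> V-{x1}" "u \<noteq> w" "e = {u, w}" using E0e by blast
    then show ?thesis using eB bnd2 by simp
  qed
  have Rinfo: "\<And>e. e \<in> R \<Longrightarrow> \<phi> e \<in> Z \<and> (\<exists>u. u \<in> V-{x1} \<and> u \<noteq> \<phi> e \<and> e = {\<phi> e, u})"
  proof -
    fix e assume eR: "e \<in> R"
    then have e: "e \<in> E0" "\<phi> e \<notin> N" "e \<in> E" by (auto simp: R_def B_def E0_def)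
    obtain u w where uw: "u \<in> V-{x1}" "w \<in> V-{x1}" "u \<noteq> w" "e = {u, w}" using E0e[OF e(1)] by blast
    have "\<phi> e \<in> e" using phi e by blast
    then have "\<phi> e = u \<or> \<phi> e = w" using uw by auto
    then show "\<phi> e \<in> Z \<and> (\<exists>u. u \<in> V-{x1} \<and> u \<noteq> \<phi> e \<and> e = {\<phi> e, u})"
    proof
      assume "\<phi> e = u" then show ?thesis using uw e by (auto simp: Z_def)
    next
      assume "\<phi> e = w" then show ?thesis using uw e by (auto simp: Z_def insert_commute)
    qed
  qed
  have finR: "finite R" using finE0 by (simp add: R_def)
  have finZ: "finite Z" using finV by (simp add: Z_def)
  have injR: "inj_on \<phi> R" using inj by (rule inj_on_subset) (auto simp: R_def E0_def)
  have YZ: "\<And>z. z \<in> Z \<Longrightarrow> 0 \<le> Y x1 * Y z" using Ynn x1 by (auto simp: Z_def)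
  have SR1: "\<And>e. e \<in> R \<Longrightarrow> prod Y e \<le> Y x1 * Y (\<phi> e)"
  proof -
    fix e assume "e \<in> R"
    then obtain u where u: "\<phi> e \<in> Z" "u \<in> V-{x1}" "u \<noteq> \<phi> e" "e = {\<phi> e, u}" using Rinfo by blast
    have "prod Y e = prod Y {\<phi> e, u}" using u(4) by (rule arg_cong)
    also have "\<dots> = Y (\<phi> e) * Y u" using u(3) by simp
    also have "\<dots> \<le> Y (\<phi> e) * Y x1"
      using u bnd1 Ynn by (intro mult_left_mono) (auto simp: Z_def)
    finally show "prod Y e \<le> Y x1 * Y (\<phi> e)" by (simp add: mult.commute)
  qed
  have SR2: "(\<Sum>e\<in>R. Y x1 * Y (\<phi> e)) = (\<Sum>z\<in>\<phi> ` R. Y x1 * Y z)"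
    using sum.reindex[OF injR, of "\<lambda>z. Y x1 * Y z"] by (simp add: comp_def)
  have phiRZ: "\<phi> ` R \<subseteq> Z" using Rinfo by blast
  have SR3: "(\<Sum>z\<in>\<phi> ` R. Y x1 * Y z) \<le> (\<Sum>z\<in>Z. Y x1 * Y z)"
    by (rule sum_mono2[OF finZ phiRZ]) (use YZ in blast)
  have SR: "sum (prod Y) R \<le> (\<Sum>e\<in>R. Y x1 * Y (\<phi> e))" using SR1 by (rule sum_mono)
  have dE: "sum (prod Y) E = sum (prod Y) E1 + sum (prod Y) B + sum (prod Y) R"
  proof -
    have "sum (prod Y) E = sum (prod Y) (E - E1) + sum (prod Y) E1"
      by (rule sum.subset_diff) (auto simp: E1_def finE)
    moreover have "sum (prod Y) E0 = sum (prod Y) (E0 - B) + sum (prod Y) B"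
      by (rule sum.subset_diff) (auto simp: B_def finE0)
    ultimately show ?thesis by (simp add: E0_def R_def)
  qed
  have dV: "(\<Sum>y\<in>V-{x1}. Y x1 * Y y) = (\<Sum>y\<in>N. Y x1 * Y y) + (\<Sum>z\<in>Z. Y x1 * Y z)"
  proof -
    have "(\<Sum>y\<in>V-{x1}. Y x1 * Y y) = (\<Sum>y\<in>V-{x1}-N. Y x1 * Y y) + (\<Sum>y\<in>N. Y x1 * Y y)"
      by (rule sum.subset_diff[OF NV]) (use finV in simp)
    then show ?thesis by (simp add: Z_def)
  qed
  show ?thesis
  proof (intro conjI impI)
    show "sum (prod Y) E \<le> (\<Sum>y\<in>V-{x1}. Y x1 * Y y) + c"
      using dE dV S1 SB SR SR2 SR3 by linarith
  next
    assume pos: "\<forall>x\<in>V. 0 < Y x" and lt: "\<forall>u\<in>V-{x1}. Y u < Y x1" and cpos: "0 < c"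
      and eq: "sum (prod Y) E = (\<Sum>y\<in>V-{x1}. Y x1 * Y y) + c"
    have Bne: "B \<noteq> {}"
    proof
      assume "B = {}"
      then have "sum (prod Y) B = 0" by simp
      then show False using dE dV S1 SB SR SR2 SR3 eq cpos by linarith
    qed
    then obtain e0 where e0: "B = {e0}" using Bcases by blast
    have Rempty: "R = {}"
    proof (rule ccontr)
      assume "R \<noteq> {}"
      have "sum (prod Y) R < (\<Sum>e\<in>R. Y x1 * Y (\<phi> e))"
      proof (rule sum_strict_mono[OF finR \<open>R \<noteq> {}\<close>])
        fix e assume "e \<in> R"
        then obtain u where u: "\<phi> e \<in> Z" "u \<in> V-{x1}" "u \<noteq> \<phi> e" "e = {\<phi> e, u}" using Rinfo by blast
        have "prod Y e = prod Y {\<phi> e, u}" using u(4) by (rule arg_cong)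
        also have "\<dots> = Y (\<phi> e) * Y u" using u(3) by simp
        also have "\<dots> < Y (\<phi> e) * Y x1"
          using u lt pos by (intro mult_strict_left_mono) (auto simp: Z_def)
        finally show "prod Y e < Y x1 * Y (\<phi> e)" by (simp add: mult.commute)
      qed
      then show False using dE dV S1 SB SR SR2 SR3 eq by linarith
    qed
    have Zempty: "Z = {}"
    proof (rule ccontr)
      assume "Z \<noteq> {}"
      have "0 < (\<Sum>z\<in>Z. Y x1 * Y z)"
        by (rule sum_pos[OF finZ \<open>Z \<noteq> {}\<close>]) (use pos x1 in \<open>auto simp: Z_def\<close>)
      then show False using dE dV S1 SB eq Rempty by simp
    qed
    then have NV': "N = V - {x1}" using NV by (auto simp: Z_def)
    have "e0 \<in> E0" using e0 by (auto simp: B_def)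
    then obtain p q where pq: "p \<in> V-{x1}" "q \<in> V-{x1}" "p \<noteq> q" "e0 = {p, q}" using E0e by blast
    have "E = E1 \<union> E0" by (auto simp: E0_def E1_def)
    also have "E0 = B" using Rempty by (auto simp: R_def B_def)
    finally have "E = (\<lambda>y. {x1, y}) ` (V-{x1}) \<union> {{p, q}}" using E1img NV' e0 pq by simp
    then show "\<exists>p q. p \<in> V-{x1} \<and> q \<in> V-{x1} \<and> p \<noteq> q \<and>
           E = (\<lambda>y. {x1, y}) ` (V-{x1}) \<union> {{p, q}}" using pq by blast
  qed
qed



lemma iso_lemma:
  assumes finV: "finite V" and n: "n = card V" and x1: "x1 \<in> V"
    and pq: "p \<in> V-{x1}" "q \<in> V-{x1}" "p \<noteq> q"
    and E: "E = (\<lambda>y. {x1, y}) ` (V-{x1}) \<union> {{p, q}}"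
  shows "\<exists>f. graph_iso f V E {0..<n} (S3_edges n) \<and> f x1 = 0"
proof -
  define W where "W = V - {x1, p, q}"
  have c3: "card {x1, p, q} = 3" using pq by auto
  have cW: "card W = n - 3" using finV x1 pq n c3 by (simp add: W_def card_Diff_subset)
  have n3: "n \<ge> 3"
  proof -
    have "{x1, p, q} \<subseteq> V" using x1 pq by auto
    then have "card {x1, p, q} \<le> card V" using finV by (rule card_mono[rotated])
    then show ?thesis using c3 n by simp
  qed
  have "\<exists>h. bij_betw h W {3..<n}"
    by (rule finite_same_card_bij) (use finV cW in \<open>auto simp: W_def\<close>)
  then obtain g where g: "bij_betw g W {3..<n}" by blast
  define f where "f u = (if u = x1 then 0 else if u = p then 1 else if u = q then 2 else g u)" for u
  have gW: "\<And>u. u \<in> W \<Longrightarrow> 3 \<le> g u \<and> g u < n" using g by (auto simp: bij_betw_def)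
  have f0: "f u = 0 \<longleftrightarrow> u = x1" if "u \<in> V" for u
    by (cases "u \<in> W") (use gW[of u] pq that in \<open>auto simp: f_def W_def\<close>)
  have f1: "f u = 1 \<longleftrightarrow> u = p" if "u \<in> V" for u
    by (cases "u \<in> W") (use gW[of u] pq that in \<open>auto simp: f_def W_def\<close>)
  have f2: "f u = 2 \<longleftrightarrow> u = q" if "u \<in> V" for u
    by (cases "u \<in> W") (use gW[of u] pq that in \<open>auto simp: f_def W_def\<close>)
  have fn: "f u < n" if "u \<in> V" for u
    by (cases "u \<in> W") (use gW[of u] n3 that in \<open>auto simp: f_def W_def\<close>)
  have injf: "inj_on f V"
  proof (rule inj_onI)
    fix a b assume ab: "a \<in> V" "b \<in> V" "f a = f b"
    show "a = b"
    proof (cases "a \<in> W \<and> b \<in> W")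
      case True
      then have "g a = g b" using ab by (auto simp: f_def W_def)
      then show ?thesis using g True by (auto simp: bij_betw_def inj_on_def)
    next
      case False
      then have "a \<in> {x1, p, q} \<or> b \<in> {x1, p, q}" using ab by (auto simp: W_def)
      moreover have "f x1 = 0" "f p = 1" "f q = 2" using pq by (auto simp: f_def)
      ultimately show ?thesis using f0[of a] f1[of a] f2[of a] f0[of b] f1[of b] f2[of b] ab by auto
    qed
  qed
  have imf: "f ` V = {0..<n}"
  proof
    show "f ` V \<subseteq> {0..<n}" using fn by auto
    show "{0..<n} \<subseteq> f ` V"
    proof
      fix k assume k: "k \<in> {0..<n}"
      show "k \<in> f ` V"
      proof (cases "k < 3")
        case True
        then have "k = 0 \<or> k = 1 \<or> k = 2" by auto
        then show ?thesis using x1 pq f0 f1 f2 by (metis DiffD1 image_eqI)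
      next
        case False
        then have "k \<in> g ` W" using g k by (auto simp: bij_betw_def)
        then obtain u where u: "u \<in> W" "k = g u" by blast
        then have "f u = k" by (auto simp: f_def W_def)
        moreover have "u \<in> V" using u by (simp add: W_def)
        ultimately show ?thesis by (metis image_eqI)
      qed
    qed
  qed
  have S3: "\<And>a b. a < n \<Longrightarrow> b < n \<Longrightarrow>
      {a, b} \<in> S3_edges n \<longleftrightarrow> (a \<noteq> b \<and> (a = 0 \<or> b = 0)) \<or> {a, b} = {1, 2}"
  proof -
    fix a b :: nat assume ab: "a < n" "b < n"
    show "{a, b} \<in> S3_edges n \<longleftrightarrow> (a \<noteq> b \<and> (a = 0 \<or> b = 0)) \<or> {a, b} = {1, 2}"
    proof
      assume "{a, b} \<in> S3_edges n"
      then show "(a \<noteq> b \<and> (a = 0 \<or> b = 0)) \<or> {a, b} = {1, 2}"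
        unfolding S3_edges_def by (auto simp: doubleton_eq_iff)
    next
      assume h: "(a \<noteq> b \<and> (a = 0 \<or> b = 0)) \<or> {a, b} = {1, 2}"
      show "{a, b} \<in> S3_edges n"
      proof (cases "{a, b} = {1, 2}")
        case True then show ?thesis by (simp add: S3_edges_def)
      next
        case False
        then have "a \<noteq> b" "a = 0 \<or> b = 0" using h by auto
        then show ?thesis unfolding S3_edges_def using ab
          by (auto simp: insert_commute)
      qed
    qed
  qed
  have Echar: "\<And>u w. u \<in> V \<Longrightarrow> w \<in> V \<Longrightarrow>
      {u, w} \<in> E \<longleftrightarrow> (u \<noteq> w \<and> (u = x1 \<or> w = x1)) \<or> {u, w} = {p, q}"
  proof -
    fix u w assume uw: "u \<in> V" "w \<in> V"
    show "{u, w} \<in> E \<longleftrightarrow> (u \<noteq> w \<and> (u = x1 \<or> w = x1)) \<or> {u, w} = {p, q}"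
      unfolding E using uw by (auto simp: doubleton_eq_iff insert_commute)
  qed
  have "graph_iso f V E {0..<n} (S3_edges n)"
    unfolding graph_iso_def
  proof (intro conjI ballI)
    show "bij_betw f V {0..<n}" using injf imf by (simp add: bij_betw_def)
    fix u w assume uw: "u \<in> V" "w \<in> V"
    have e1: "f u \<noteq> f w \<longleftrightarrow> u \<noteq> w" using injf uw by (auto simp: inj_on_def)
    have e2: "{f u, f w} = {1, 2} \<longleftrightarrow> {u, w} = {p, q}"
      using f1 f2 uw pq by (auto simp: doubleton_eq_iff)
    show "{u, w} \<in> E \<longleftrightarrow> {f u, f w} \<in> S3_edges n"
      using Echar[OF uw] S3[OF fn[OF uw(1)] fn[OF uw(2)]] e1 e2 f0 uw by auto
  qed
  moreover have "f x1 = 0" by (simp add: f_def)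
  ultimately show ?thesis by blast
qed

theorem lemma3p2:
  fixes V :: "'a set" and E :: "'a set set" and X :: "'a \<Rightarrow> real"
    and v :: "nat \<Rightarrow> 'a" and n :: nat
  assumes U: "unicyclic V E"
    and n: "n = card V" "n \<ge> 3"
    and sign: "(\<forall>x\<in>V. X x \<ge> 0) \<or> (\<forall>x\<in>V. X x \<le> 0)"
    and lab: "bij_betw v {1..n} V"
    and ord: "\<And>i j. 1 \<le> i \<Longrightarrow> i \<le> j \<Longrightarrow> j \<le> n \<Longrightarrow> \<bar>X (v j)\<bar> \<le> \<bar>X (v i)\<bar>"
  shows "(\<Sum>e\<in>E. \<Prod>x\<in>e. X x)
           \<le> (\<Sum>i=2..n. X (v 1) * X (v i)) + X (v 2) * X (v 3) \<and>
         (((\<forall>x\<in>V. X x > 0) \<or> (\<forall>x\<in>V. X x < 0)) \<longrightarrow> \<bar>X (v 1)\<bar> > \<bar>X (v 2)\<bar> \<longrightarrow>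
         (\<Sum>e\<in>E. \<Prod>x\<in>e. X x) = (\<Sum>i=2..n. X (v 1) * X (v i)) + X (v 2) * X (v 3) \<longrightarrow>
         (\<exists>f. graph_iso f V E {0..<n} (S3_edges n) \<and> f (v 1) = 0))"
proof -
  have sg: "simple_graph V E" and uc: "\<exists>!C. is_cycle E C" using U by (auto simp: unicyclic_def)
  have finV: "finite V" using sg by (simp add: simple_graph_def)
  have EV: "\<forall>e\<in>E. \<exists>u w. u \<in> V \<and> w \<in> V \<and> u \<noteq> w \<and> e = {u, w}"
    using sg by (simp add: simple_graph_def)
  have finE: "finite E" using finE_lem[OF finV EV] .
  have tw: "twosets E" using EV unfolding twosets_def by blast
  obtain \<phi> where \<phi>: "inj_on \<phi> E" "\<forall>e\<in>E. \<phi> e \<in> e" using unicyclic_orient[OF finE tw uc] by blast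
  define Y where "Y x = \<bar>X x\<bar>" for x
  have XY: "X u * X w = Y u * Y w" if "u \<in> V" "w \<in> V" for u w
  proof -
    have "0 \<le> X u * X w" using sign that by (auto intro: mult_nonneg_nonneg mult_nonpos_nonpos)
    then show ?thesis by (simp add: Y_def abs_mult[symmetric])
  qed
  have vV: "v i \<in> V" if "1 \<le> i" "i \<le> n" for i using lab that by (auto simp: bij_betw_def)
  have vsurj: "\<exists>i. 1 \<le> i \<and> i \<le> n \<and> u = v i" if "u \<in> V" for u
  proof -
    have "u \<in> v ` {1..n}" using lab that by (simp add: bij_betw_def)
    then obtain i where "i \<in> {1..n}" "u = v i" by blast
    then show ?thesis by auto
  qed
  define x1 where "x1 = v 1"
  have x1V: "x1 \<in> V" using vV n by (simp add: x1_def)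
  have v2: "v 2 \<in> V" "v 3 \<in> V" using vV n by auto
  have oth: "\<exists>i. 2 \<le> i \<and> i \<le> n \<and> u = v i" if u: "u \<in> V - {x1}" for u
  proof -
    obtain i where i: "1 \<le> i" "i \<le> n" "u = v i" using vsurj u by blast
    then have "i \<noteq> 1" using u by (auto simp: x1_def)
    then show ?thesis using i by (intro exI[of _ i]) auto
  qed
  have Ynn: "\<forall>x\<in>V. 0 \<le> Y x" by (simp add: Y_def)
  have bnd2u: "Y u \<le> Y (v 2)" if u: "u \<in> V - {x1}" for u
  proof -
    obtain i where i: "2 \<le> i" "i \<le> n" "u = v i" using oth[OF u] by blast
    show ?thesis using ord[of 2 i] i by (simp add: Y_def)
  qed
  have b21: "Y (v 2) \<le> Y x1" using ord[of 1 2] n by (simp add: Y_def x1_def)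
  have bnd1: "\<forall>u\<in>V-{x1}. Y u \<le> Y x1"
  proof
    fix u assume "u \<in> V - {x1}"
    then show "Y u \<le> Y x1" using bnd2u[of u] b21 by linarith
  qed
  have bnd2: "\<forall>u\<in>V-{x1}. \<forall>w\<in>V-{x1}. u \<noteq> w \<longrightarrow> Y u * Y w \<le> Y (v 2) * Y (v 3)"
  proof (intro ballI impI)
    fix u w assume uw: "u \<in> V - {x1}" "w \<in> V - {x1}" "u \<noteq> w"
    obtain i where i: "2 \<le> i" "i \<le> n" "u = v i" using oth uw by blast
    obtain j where j: "2 \<le> j" "j \<le> n" "w = v j" using oth uw by blast
    have "i \<noteq> j" using i j uw by auto
    show "Y u * Y w \<le> Y (v 2) * Y (v 3)"
    proof (cases "i < j")
      case True
      have "Y u \<le> Y (v 2)" "Y w \<le> Y (v 3)" using ord[of 2 i] ord[of 3 j] i j True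
        by (auto simp: Y_def)
      then show ?thesis by (intro mult_mono) (auto simp: Y_def)
    next
      case False
      then have "j < i" using \<open>i \<noteq> j\<close> by simp
      have "Y w \<le> Y (v 2)" "Y u \<le> Y (v 3)" using ord[of 2 j] ord[of 3 i] i j \<open>j < i\<close>
        by (auto simp: Y_def)
      then have "Y w * Y u \<le> Y (v 2) * Y (v 3)" by (intro mult_mono) (auto simp: Y_def)
      then show ?thesis by (simp add: mult.commute)
    qed
  qed
  have c0: "0 \<le> Y (v 2) * Y (v 3)" by (simp add: Y_def)
  note M = main_ineq[OF finV EV \<phi>(1) \<phi>(2) Ynn x1V bnd1 bnd2 c0]
  have LHS: "(\<Sum>e\<in>E. \<Prod>x\<in>e. X x) = sum (prod Y) E"
  proof (rule sum.cong)
    fix e assume "e \<in> E"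
    then obtain u w where uw: "u \<in> V" "w \<in> V" "u \<noteq> w" "e = {u, w}" using EV by blast
    then show "(\<Prod>x\<in>e. X x) = prod Y e" using XY[OF uw(1,2)] by simp
  qed simp
  have img: "v ` {2..n} = V - {x1}"
  proof -
    have "v ` {2..n} = v ` ({1..n} - {1})" by (rule arg_cong[where f="image v"]) auto
    also have "\<dots> = v ` {1..n} - v ` {1}"
      using lab n(2) by (intro inj_on_image_set_diff) (auto simp: bij_betw_def)
    also have "\<dots> = V - {x1}" using lab by (simp add: bij_betw_def x1_def)
    finally show ?thesis .
  qed
  have inj2: "inj_on v {2..n}" using lab by (rule bij_betw_imp_inj_on[THEN inj_on_subset]) auto
  have RHS1: "(\<Sum>i=2..n. X (v 1) * X (v i)) = (\<Sum>y\<in>V-{x1}. Y x1 * Y y)"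
  proof -
    have "(\<Sum>i=2..n. X (v 1) * X (v i)) = (\<Sum>i=2..n. Y x1 * Y (v i))"
      by (rule sum.cong) (use XY vV n in \<open>auto simp: x1_def\<close>)
    also have "\<dots> = (\<Sum>y\<in>v ` {2..n}. Y x1 * Y y)"
      using sum.reindex[OF inj2, of "\<lambda>y. Y x1 * Y y"] by (simp add: comp_def)
    finally show ?thesis using img by simp
  qed
  have RHS2: "X (v 2) * X (v 3) = Y (v 2) * Y (v 3)" using XY v2 by blast
  show ?thesis
  proof (intro conjI impI)
    show "(\<Sum>e\<in>E. \<Prod>x\<in>e. X x) \<le> (\<Sum>i=2..n. X (v 1) * X (v i)) + X (v 2) * X (v 3)"
      using M LHS RHS1 RHS2 by simp
  next
    assume pos: "(\<forall>x\<in>V. X x > 0) \<or> (\<forall>x\<in>V. X x < 0)" and lt: "\<bar>X (v 1)\<bar> > \<bar>X (v 2)\<bar>"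
      and eq: "(\<Sum>e\<in>E. \<Prod>x\<in>e. X x) = (\<Sum>i=2..n. X (v 1) * X (v i)) + X (v 2) * X (v 3)"
    have Ypos: "\<forall>x\<in>V. 0 < Y x" using pos by (auto simp: Y_def)
    have Ylt: "\<forall>u\<in>V-{x1}. Y u < Y x1"
    proof
      fix u assume "u \<in> V - {x1}"
      then show "Y u < Y x1" using bnd2u[of u] lt by (simp add: Y_def x1_def)
    qed
    have cpos: "0 < Y (v 2) * Y (v 3)" using Ypos v2 by simp
    have eq': "sum (prod Y) E = (\<Sum>y\<in>V-{x1}. Y x1 * Y y) + Y (v 2) * Y (v 3)"
      using eq LHS RHS1 RHS2 by simp
    obtain p q where pq: "p \<in> V-{x1}" "q \<in> V-{x1}" "p \<noteq> q"
      "E = (\<lambda>y. {x1, y}) ` (V-{x1}) \<union> {{p, q}}"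
      using M Ypos Ylt cpos eq' by blast
    show "\<exists>f. graph_iso f V E {0..<n} (S3_edges n) \<and> f (v 1) = 0"
      using iso_lemma[OF finV n(1) x1V pq] by (simp add: x1_def)
  qed
qed

end
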